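(* For every positive integer $n$ there exist integers $R$ and $m$ and a finite set $\Lambda\subset\mathbb{N}^m$ such that the following holds. If $G$ is a simply connected, simple, compact Lie group of rank $r\ge R$ and $\lambda$ is a dominant weight with $\chi_\lambda(1)\le r^n$, then either $G$ is of type $A_r$ and $$\lambda=a_1\varpi_1+\cdots+a_m\varpi_m+b_m\varpi_{r+1-m}+\cdots+b_1\varpi_r$$ for some $(a_1,\ldots,a_m),(b_1,\ldots,b_m)\in\Lambda$, or $G$ is of type $B_r$, $C_r$ or $D_r$ and $$\lambda=a_1\varpi_1+\cdots+a_m\varpi_m$$ for some $(a_1,\ldots,a_m)\in\Lambda$.
   Context: A compact Lie group is called simple if it is connected, has finite center, and is a simple group modulo its center. $\varpi_1,\ldots,\varpi_r$ are the fundamental weights, with simple roots numbered as in Bourbaki (for $A_r,B_r,C_r,D_r$, $\alpha_1$ is at the end of the Dynkin diagram away from the branch/double bond, $\alpha_i$ adjacent to $\alpha_{i+1}$). $\chi_\lambda$ denotes the irreducible character of $G$ with highest weight $\lambda$. $\mathbb{N}$ denotes the non-negative integers. *)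

theory Defs
  imports Complex_Main
begin

text \<open>Simply connected simple compact Lie groups of large rank are classified by their
Cartan type (A_r, B_r, C_r, D_r; exceptional types have rank at most 8).  Irreducible
characters correspond to dominant weights, written in the basis of fundamental weights
(Dynkin labels a 1, ..., a r), and the degree chi_lambda(1) is given by the Weyl
dimension formula.  We model the root systems concretely in the standard
epsilon-coordinates (Bourbaki numbering).\<close>

datatype ctype = TA | TB | TC | TD

text \<open>Admissible ranks for the classical types (to avoid coincidences in small rank).\<close>
fun valid_type :: "ctype \<Rightarrow> nat \<Rightarrow> bool" where
  "valid_type TA r = (r \<ge> 1)"
| "valid_type TB r = (r \<ge> 2)"
| "valid_type TC r = (r \<ge> 3)"
| "valid_type TD r = (r \<ge> 4)"

text \<open>Dimension of the ambient Euclidean space, coordinates indexed 1..amb.\<close>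
fun amb :: "ctype \<Rightarrow> nat \<Rightarrow> nat" where
  "amb TA r = r + 1"
| "amb TB r = r"
| "amb TC r = r"
| "amb TD r = r"

definition eps :: "nat \<Rightarrow> nat \<Rightarrow> real" where
  "eps i = (\<lambda>k. if k = i then 1 else 0)"

fun pos_roots :: "ctype \<Rightarrow> nat \<Rightarrow> (nat \<Rightarrow> real) set" where
  "pos_roots TA r = {(\<lambda>k. eps i k - eps j k) | i j. 1 \<le> i \<and> i < j \<and> j \<le> r + 1}"
| "pos_roots TB r = {(\<lambda>k. eps i k - eps j k) | i j. 1 \<le> i \<and> i < j \<and> j \<le> r}
     \<union> {(\<lambda>k. eps i k + eps j k) | i j. 1 \<le> i \<and> i < j \<and> j \<le> r}
     \<union> {eps i | i. 1 \<le> i \<and> i \<le> r}"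
| "pos_roots TC r = {(\<lambda>k. eps i k - eps j k) | i j. 1 \<le> i \<and> i < j \<and> j \<le> r}
     \<union> {(\<lambda>k. eps i k + eps j k) | i j. 1 \<le> i \<and> i < j \<and> j \<le> r}
     \<union> {(\<lambda>k. 2 * eps i k) | i. 1 \<le> i \<and> i \<le> r}"
| "pos_roots TD r = {(\<lambda>k. eps i k - eps j k) | i j. 1 \<le> i \<and> i < j \<and> j \<le> r}
     \<union> {(\<lambda>k. eps i k + eps j k) | i j. 1 \<le> i \<and> i < j \<and> j \<le> r}"

text \<open>Fundamental weights (Bourbaki numbering): j-th coordinate of varpi_i.
  (For A_r the weight is taken modulo the all-ones vector, irrelevant for pairings with roots.)\<close>
fun fund_weight :: "ctype \<Rightarrow> nat \<Rightarrow> nat \<Rightarrow> nat \<Rightarrow> real" where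
  "fund_weight TA r i j = (if j \<le> i then 1 else 0)"
| "fund_weight TB r i j = (if i < r then (if j \<le> i then 1 else 0) else 1/2)"
| "fund_weight TC r i j = (if j \<le> i then 1 else 0)"
| "fund_weight TD r i j =
     (if i + 2 \<le> r then (if j \<le> i then 1 else 0)
      else if i + 1 = r then (if j < r then 1/2 else -1/2)
      else 1/2)"

definition ip :: "ctype \<Rightarrow> nat \<Rightarrow> (nat \<Rightarrow> real) \<Rightarrow> (nat \<Rightarrow> real) \<Rightarrow> real" where
  "ip t r x y = (\<Sum>k\<in>{1..amb t r}. x k * y k)"

definition weight :: "ctype \<Rightarrow> nat \<Rightarrow> (nat \<Rightarrow> nat) \<Rightarrow> nat \<Rightarrow> real" where
  "weight t r a = (\<lambda>j. \<Sum>i\<in>{1..r}. real (a i) * fund_weight t r i j)"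

definition rho :: "ctype \<Rightarrow> nat \<Rightarrow> nat \<Rightarrow> real" where
  "rho t r = (\<lambda>k. (1/2) * (\<Sum>\<alpha>\<in>pos_roots t r. \<alpha> k))"

definition char_degree :: "ctype \<Rightarrow> nat \<Rightarrow> (nat \<Rightarrow> nat) \<Rightarrow> real" where
  "char_degree t r a =
     (\<Prod>\<alpha>\<in>pos_roots t r.
        ip t r (\<lambda>k. weight t r a k + rho t r k) \<alpha> / ip t r (rho t r) \<alpha>)"

end

theory Submission
  imports Defs
begin


definition dm :: "nat \<Rightarrow> nat \<Rightarrow> nat \<Rightarrow> real" where "dm i j = (\<lambda>k. eps i k - eps j k)"
definition dp :: "nat \<Rightarrow> nat \<Rightarrow> nat \<Rightarrow> real" where "dp i j = (\<lambda>k. eps i k + eps j k)"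
definition d2 :: "nat \<Rightarrow> nat \<Rightarrow> real" where "d2 i = (\<lambda>k. 2 * eps i k)"
definition Pr :: "nat \<Rightarrow> (nat \<times> nat) set" where "Pr N = {(i,j). 1 \<le> i \<and> i < j \<and> j \<le> N}"

lemma Pr_fin: "finite (Pr N)"
  by (rule finite_subset[of _ "{0..N} \<times> {0..N}"]) (auto simp: Pr_def)

lemma posA: "pos_roots TA r = (\<lambda>(i,j). dm i j) ` Pr (r+1)"
  by (auto simp: Pr_def dm_def image_def)
lemma posB: "pos_roots TB r = (\<lambda>(i,j). dm i j) ` Pr r \<union> (\<lambda>(i,j). dp i j) ` Pr r \<union> eps ` {1..r}"
  by (auto simp: Pr_def dm_def dp_def image_def)
lemma posC: "pos_roots TC r = (\<lambda>(i,j). dm i j) ` Pr r \<union> (\<lambda>(i,j). dp i j) ` Pr r \<union> d2 ` {1..r}"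
  by (auto simp: Pr_def dm_def dp_def d2_def image_def)
lemma posD: "pos_roots TD r = (\<lambda>(i,j). dm i j) ` Pr r \<union> (\<lambda>(i,j). dp i j) ` Pr r"
  by (auto simp: Pr_def dm_def dp_def image_def)

lemma pos_fin: "finite (pos_roots t r)"
  by (cases t) (simp_all add: posA posB posC posD Pr_fin del: pos_roots.simps)

lemma dm_inj: "i < j \<Longrightarrow> i' < j' \<Longrightarrow> dm i j = dm i' j' \<Longrightarrow> i = i' \<and> j = j'"
proof -
  assume a: "i < j" "i' < j'" "dm i j = dm i' j'"
  have "dm i j i = dm i' j' i" "dm i j j = dm i' j' j" using a by simp_all
  thus ?thesis using a by (auto simp: dm_def eps_def split: if_splits)
qed

lemma dp_inj: "i < j \<Longrightarrow> i' < j' \<Longrightarrow> dp i j = dp i' j' \<Longrightarrow> i = i' \<and> j = j'"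
proof -
  assume a: "i < j" "i' < j'" "dp i j = dp i' j'"
  have "dp i j i = dp i' j' i" "dp i j j = dp i' j' j" using a by simp_all
  thus ?thesis using a by (auto simp: dp_def eps_def split: if_splits)
qed

lemma inj_dm: "inj_on (\<lambda>(i,j). dm i j) (Pr N)"
  by (auto simp: inj_on_def Pr_def dest: dm_inj)
lemma inj_dp: "inj_on (\<lambda>(i,j). dp i j) (Pr N)"
  by (auto simp: inj_on_def Pr_def dest: dp_inj)
lemma inj_eps: "inj eps"
proof (rule injI)
  fix x y assume "eps x = eps y"
  hence "eps x x = eps y x" by simp
  thus "x = y" by (auto simp: eps_def split: if_splits)
qed
lemma inj_d2: "inj d2"
proof (rule injI)
  fix x y assume "d2 x = d2 y"
  hence "d2 x x = d2 y x" by simp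
  thus "x = y" by (auto simp: d2_def eps_def split: if_splits)
qed

lemma disj1: "(\<lambda>(i,j). dm i j) ` Pr r \<inter> (\<lambda>(i,j). dp i j) ` Pr r = {}"
proof -
  { fix i j i' j' assume "i < j" "i' < j'" "dm i j = dp i' j'"
    hence "dm i j j = dp i' j' j" by simp
    hence False using \<open>i<j\<close> by (auto simp: dm_def dp_def eps_def split: if_splits) }
  thus ?thesis by (auto simp: Pr_def)
qed
lemma disj2: "((\<lambda>(i,j). dm i j) ` Pr r \<union> (\<lambda>(i,j). dp i j) ` Pr r) \<inter> eps ` {1..r} = {}"
proof -
  { fix i j i' assume "i < j" "eps i' = dm i j"
    hence "dm i j j = eps i' j" by simp
    hence False using \<open>i<j\<close> by (auto simp: dm_def eps_def split: if_splits) }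
  moreover
  { fix i j i' assume "i < j" "eps i' = dp i j"
    hence "dp i j i = eps i' i" "dp i j j = eps i' j" by simp_all
    hence False using \<open>i<j\<close> by (auto simp: dp_def eps_def split: if_splits) }
  ultimately show ?thesis by (auto simp: Pr_def)
qed
lemma disj3: "((\<lambda>(i,j). dm i j) ` Pr r \<union> (\<lambda>(i,j). dp i j) ` Pr r) \<inter> d2 ` {1..r} = {}"
proof -
  { fix i j i' assume "i < j" "d2 i' = dm i j"
    hence "dm i j i' = d2 i' i'" by simp
    hence False using \<open>i<j\<close> by (auto simp: dm_def d2_def eps_def split: if_splits) }
  moreover
  { fix i j i' assume "i < j" "d2 i' = dp i j"
    hence "dp i j i' = d2 i' i'" by simp_all
    hence False using \<open>i<j\<close> by (auto simp: dp_def d2_def eps_def split: if_splits) }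
  ultimately show ?thesis by (auto simp: Pr_def)
qed

lemma Pr_Sigma: "Pr N = Sigma {1..N} (\<lambda>i. {i+1..N})"
  by (auto simp: Pr_def)

lemma S1: "k \<in> {1..N} \<Longrightarrow> (\<Sum>(i,j)\<in>Pr N. eps i k) = real (N - k)"
proof -
  assume k: "k \<in> {1..N}"
  have "(\<Sum>(i,j)\<in>Pr N. eps i k) = (\<Sum>i\<in>{1..N}. \<Sum>j\<in>{i+1..N}. eps i k)"
    unfolding Pr_Sigma by (rule sum.Sigma[symmetric]) auto
  also have "\<dots> = (\<Sum>i\<in>{1..N}. if i = k then real (card {i+1..N}) else 0)"
    by (rule sum.cong) (auto simp: eps_def)
  also have "\<dots> = real (N - k)" using k by (simp add: sum.delta')
  finally show ?thesis .
qed

lemma S2: "k \<in> {1..N} \<Longrightarrow> (\<Sum>(i,j)\<in>Pr N. eps j k) = real (k - 1)"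
proof -
  assume k: "k \<in> {1..N}"
  have "(\<Sum>(i,j)\<in>Pr N. eps j k) = (\<Sum>i\<in>{1..N}. \<Sum>j\<in>{i+1..N}. eps j k)"
    unfolding Pr_Sigma by (rule sum.Sigma[symmetric]) auto
  also have "\<dots> = (\<Sum>i\<in>{1..N}. if i < k then 1 else 0)"
    using k by (intro sum.cong) (auto simp: eps_def sum.delta')
  also have "\<dots> = real (card {i\<in>{1..N}. i < k})"
    by (simp add: sum.inter_filter[symmetric])
  also have "{i\<in>{1..N}. i < k} = {1..<k}" using k by auto
  finally show ?thesis by simp
qed

lemma S3: "k \<in> {1..N} \<Longrightarrow> (\<Sum>i\<in>{1..N}. eps i k) = 1"
  by (simp add: eps_def sum.delta')

lemma sum_dm: "(\<Sum>x\<in>Pr N. (case x of (i,j) \<Rightarrow> dm i j) k) = (\<Sum>(i,j)\<in>Pr N. eps i k) - (\<Sum>(i,j)\<in>Pr N. eps j k)"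
  by (simp add: dm_def split_def sum_subtractf)
lemma sum_dp: "(\<Sum>x\<in>Pr N. (case x of (i,j) \<Rightarrow> dp i j) k) = (\<Sum>(i,j)\<in>Pr N. eps i k) + (\<Sum>(i,j)\<in>Pr N. eps j k)"
  by (simp add: dp_def split_def sum.distrib)

lemma rhoA: "k \<in> {1..r+1} \<Longrightarrow> rho TA r k = (real r + 2 - 2 * real k) / 2"
  unfolding rho_def posA
  by (subst sum.reindex[OF inj_dm]) (simp add: sum_dm S1 S2 of_nat_diff)

lemma rhoB: "k \<in> {1..r} \<Longrightarrow> rho TB r k = real r - real k + 1/2"
  unfolding rho_def posB using disj1 disj2 S3[of k r]
  by (simp add: sum.union_disjoint Pr_fin sum.reindex[OF inj_dm] sum.reindex[OF inj_dp] sum.reindex[OF inj_eps[THEN inj_on_subset]] sum_dm sum_dp S1 S2 S3 of_nat_diff)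

lemma sum_d2: "(\<Sum>x\<in>{1..N}. d2 x k) = 2 * (\<Sum>i\<in>{1..N}. eps i k)"
  by (simp add: d2_def sum_distrib_left)

lemma rhoC: "k \<in> {1..r} \<Longrightarrow> rho TC r k = real r - real k + 1"
  unfolding rho_def posC using disj1 disj3 S3[of k r] sum_d2[of k r]
  by (simp add: sum.union_disjoint Pr_fin sum.reindex[OF inj_dm] sum.reindex[OF inj_dp] sum.reindex[OF inj_d2[THEN inj_on_subset]] sum_dm sum_dp sum_d2 S1 S2 of_nat_diff)

lemma rhoD: "k \<in> {1..r} \<Longrightarrow> rho TD r k = real r - real k"
  unfolding rho_def posD using disj1
  by (simp add: sum.union_disjoint Pr_fin sum.reindex[OF inj_dm] sum.reindex[OF inj_dp] sum_dm sum_dp S1 S2 of_nat_diff)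

lemma sdelta: "(\<Sum>k\<in>A. x k * (if k = i then 1 else 0)) = (if i \<in> A then x i else (0::real))" if "finite A"
proof -
  have "(\<lambda>k. x k * (if k = i then 1 else 0)) = (\<lambda>k. if k = i then x k else 0)" by auto
  thus ?thesis using that by (simp only:) (simp add: sum.delta')
qed

lemma ip_eps: "i \<in> {1..amb t r} \<Longrightarrow> ip t r x (eps i) = x i"
  by (simp add: ip_def eps_def sdelta)
lemma ip_dm: "i \<in> {1..amb t r} \<Longrightarrow> j \<in> {1..amb t r} \<Longrightarrow> ip t r x (dm i j) = x i - x j"
  by (simp add: ip_def dm_def eps_def right_diff_distrib sum_subtractf sdelta)
lemma ip_dp: "i \<in> {1..amb t r} \<Longrightarrow> j \<in> {1..amb t r} \<Longrightarrow> ip t r x (dp i j) = x i + x j"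
  by (simp add: ip_def dp_def eps_def distrib_left sum.distrib sdelta)
lemma ip_d2: "i \<in> {1..amb t r} \<Longrightarrow> ip t r x (d2 i) = 2 * x i"
  by (simp add: ip_def d2_def eps_def mult.left_commute[of _ 2] sum_distrib_left[symmetric] sdelta)
lemma ip_add: "ip t r (\<lambda>k. x k + y k) z = ip t r x z + ip t r y z"
  by (simp add: ip_def distrib_right sum.distrib)
lemma ip_weight: "ip t r (weight t r a) z = (\<Sum>l\<in>{1..r}. real (a l) * ip t r (fund_weight t r l) z)"
proof -
  have "ip t r (weight t r a) z = (\<Sum>k\<in>{1..amb t r}. \<Sum>l\<in>{1..r}. real (a l) * (fund_weight t r l k * z k))"
    unfolding ip_def weight_def by (simp add: sum_distrib_right mult.assoc)
  also have "\<dots> = (\<Sum>l\<in>{1..r}. \<Sum>k\<in>{1..amb t r}. real (a l) * (fund_weight t r l k * z k))"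
    by (rule sum.swap)
  finally show ?thesis by (simp add: ip_def sum_distrib_left)
qed



lemma amb_cases: "amb t r = (if t = TA then r + 1 else r)"
  by (cases t) auto

lemma rho_dm: "valid_type t r \<Longrightarrow> i \<in> {1..amb t r} \<Longrightarrow> j \<in> {1..amb t r} \<Longrightarrow>
   ip t r (rho t r) (dm i j) = real j - real i"
  by (cases t) (auto simp: ip_dm rhoA rhoB rhoC rhoD field_simps)

lemma rho_dp: "t \<noteq> TA \<Longrightarrow> i \<in> {1..r} \<Longrightarrow> j \<in> {1..r} \<Longrightarrow> i < j \<Longrightarrow>
   0 < ip t r (rho t r) (dp i j) \<and> ip t r (rho t r) (dp i j) \<le> 2 * real r + 2 - real i - real j"
  by (cases t) (auto simp: ip_dp rhoB rhoC rhoD)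

lemma dm_in: "valid_type t r \<Longrightarrow> 1 \<le> i \<Longrightarrow> i < j \<Longrightarrow> j \<le> amb t r \<Longrightarrow> dm i j \<in> pos_roots t r"
proof -
  assume a: "valid_type t r" "1 \<le> i" "i < j" "j \<le> amb t r"
  hence "(i,j) \<in> Pr (amb t r)" by (simp add: Pr_def)
  hence "dm i j \<in> (\<lambda>(i,j). dm i j) ` Pr (amb t r)" by force
  thus ?thesis by (cases t) (simp_all add: posA posB posC posD del: pos_roots.simps)
qed

lemma dp_in: "t \<noteq> TA \<Longrightarrow> 1 \<le> i \<Longrightarrow> i < j \<Longrightarrow> j \<le> r \<Longrightarrow> dp i j \<in> pos_roots t r"
proof -
  assume a: "t \<noteq> TA" "1 \<le> i" "i < j" "j \<le> r"
  hence "(i,j) \<in> Pr r" by (simp add: Pr_def)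
  hence "dp i j \<in> (\<lambda>(i,j). dp i j) ` Pr r" by force
  thus ?thesis using a by (cases t) (simp_all add: posA posB posC posD del: pos_roots.simps)
qed

lemma pos_cases:
  assumes "\<alpha> \<in> pos_roots t r"
  obtains (m) i j where "\<alpha> = dm i j" "1 \<le> i" "i < j" "j \<le> amb t r"
  | (p) i j where "t \<noteq> TA" "\<alpha> = dp i j" "1 \<le> i" "i < j" "j \<le> r"
  | (e) i where "t = TB" "\<alpha> = eps i" "1 \<le> i" "i \<le> r"
  | (d) i where "t = TC" "\<alpha> = d2 i" "1 \<le> i" "i \<le> r"
  using assms by (cases t) (auto simp: posA posB posC posD Pr_def simp del: pos_roots.simps)

lemma rho_pos: "valid_type t r \<Longrightarrow> \<alpha> \<in> pos_roots t r \<Longrightarrow> 0 < ip t r (rho t r) \<alpha>"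
proof -
  assume v: "valid_type t r" and a: "\<alpha> \<in> pos_roots t r"
  show ?thesis using a
  proof (cases rule: pos_cases)
    case (m i j) thus ?thesis using v by (simp add: rho_dm)
  next
    case (p i j) thus ?thesis using rho_dp[of t i r j] by simp
  next
    case (e i) thus ?thesis by (simp add: ip_eps rhoB)
  next
    case (d i) thus ?thesis by (simp add: ip_d2 rhoC)
  qed
qed

lemma w_nonneg: "\<alpha> \<in> pos_roots t r \<Longrightarrow> l \<in> {1..r} \<Longrightarrow> 0 \<le> ip t r (fund_weight t r l) \<alpha>"
proof -
  assume a: "\<alpha> \<in> pos_roots t r" and l: "l \<in> {1..r}"
  show ?thesis using a
  proof (cases rule: pos_cases)
    case (m i j) thus ?thesis by (cases t) (auto simp: ip_dm)
  next
    case (p i j) thus ?thesis by (cases t) (auto simp: ip_dp)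
  next
    case (e i) thus ?thesis by (simp add: ip_eps)
  next
    case (d i) thus ?thesis by (simp add: ip_d2)
  qed
qed

lemma w_dm: "valid_type t r \<Longrightarrow> 1 \<le> i \<Longrightarrow> i \<le> l \<Longrightarrow> l < j \<Longrightarrow> j \<le> amb t r \<Longrightarrow> l \<le> r \<Longrightarrow>
  1 \<le> ip t r (fund_weight t r l) (dm i j)"
  by (cases t) (auto simp: ip_dm)

lemma w_dp: "t \<noteq> TA \<Longrightarrow> 1 \<le> i \<Longrightarrow> i < j \<Longrightarrow> j + 1 \<le> r \<Longrightarrow> j \<le> l \<Longrightarrow> l \<le> r \<Longrightarrow>
  1 \<le> ip t r (fund_weight t r l) (dp i j)"
  by (cases t) (auto simp: ip_dp)

definition fac :: "ctype \<Rightarrow> nat \<Rightarrow> (nat \<Rightarrow> nat) \<Rightarrow> (nat \<Rightarrow> real) \<Rightarrow> real" where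
  "fac t r a \<alpha> = ip t r (\<lambda>k. weight t r a k + rho t r k) \<alpha> / ip t r (rho t r) \<alpha>"

lemma cd_fac: "char_degree t r a = prod (fac t r a) (pos_roots t r)"
  by (simp add: char_degree_def fac_def)

lemma fac_eq: "valid_type t r \<Longrightarrow> \<alpha> \<in> pos_roots t r \<Longrightarrow>
  fac t r a \<alpha> = 1 + ip t r (weight t r a) \<alpha> / ip t r (rho t r) \<alpha>"
proof -
  assume v: "valid_type t r" "\<alpha> \<in> pos_roots t r"
  have "ip t r (\<lambda>k. weight t r a k + rho t r k) \<alpha> = ip t r (weight t r a) \<alpha> + ip t r (rho t r) \<alpha>"
    by (rule ip_add)
  thus ?thesis using rho_pos[OF v] unfolding fac_def by (simp add: field_simps)
qed

lemma wt_nonneg: "\<alpha> \<in> pos_roots t r \<Longrightarrow> 0 \<le> ip t r (weight t r a) \<alpha>"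
  unfolding ip_weight by (rule sum_nonneg) (simp add: w_nonneg)

lemma wt_ge: "\<alpha> \<in> pos_roots t r \<Longrightarrow> l \<in> {1..r} \<Longrightarrow> real (a l) * ip t r (fund_weight t r l) \<alpha> \<le> ip t r (weight t r a) \<alpha>"
  unfolding ip_weight
  by (rule member_le_sum[where f = "\<lambda>l. real (a l) * ip t r (fund_weight t r l) \<alpha>"]) (auto simp: w_nonneg)

lemma fac_ge1: "valid_type t r \<Longrightarrow> \<alpha> \<in> pos_roots t r \<Longrightarrow> 1 \<le> fac t r a \<alpha>"
  using rho_pos[of t r \<alpha>] wt_nonneg[of \<alpha> t r a] by (simp add: fac_eq)

lemma fac_dm: "valid_type t r \<Longrightarrow> 1 \<le> i \<Longrightarrow> i \<le> l \<Longrightarrow> l < j \<Longrightarrow> j \<le> amb t r \<Longrightarrow> l \<le> r \<Longrightarrow>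
  1 + real (a l) / (real j - real i) \<le> fac t r a (dm i j)"
proof -
  assume as: "valid_type t r" "1 \<le> i" "i \<le> l" "l < j" "j \<le> amb t r" "l \<le> r"
  have in1: "dm i j \<in> pos_roots t r" using as by (intro dm_in) auto
  have r: "ip t r (rho t r) (dm i j) = real j - real i" using as by (intro rho_dm) auto
  have w: "real (a l) \<le> ip t r (weight t r a) (dm i j)"
  proof -
    have "real (a l) * 1 \<le> real (a l) * ip t r (fund_weight t r l) (dm i j)"
      using w_dm[OF as(1-6)] by (intro mult_left_mono) auto
    thus ?thesis using wt_ge[OF in1, of l a] as by simp
  qed
  have "real (a l) / (real j - real i) \<le> ip t r (weight t r a) (dm i j) / (real j - real i)"
    using as w by (intro divide_right_mono) auto
  thus ?thesis using fac_eq[OF as(1) in1, of a] r by simp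
qed

lemma fac_dp: "valid_type t r \<Longrightarrow> t \<noteq> TA \<Longrightarrow> 1 \<le> i \<Longrightarrow> i < j \<Longrightarrow> j + 1 \<le> r \<Longrightarrow> j \<le> l \<Longrightarrow> l \<le> r \<Longrightarrow>
  1 + real (a l) / (2 * real r + 2 - real i - real j) \<le> fac t r a (dp i j)"
proof -
  assume as: "valid_type t r" "t \<noteq> TA" "1 \<le> i" "i < j" "j + 1 \<le> r" "j \<le> l" "l \<le> r"
  have in1: "dp i j \<in> pos_roots t r" using as by (intro dp_in) auto
  have r: "0 < ip t r (rho t r) (dp i j)" "ip t r (rho t r) (dp i j) \<le> 2 * real r + 2 - real i - real j"
    using rho_dp[of t i r j] as by auto
  have w: "real (a l) \<le> ip t r (weight t r a) (dp i j)"
  proof -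
    have "real (a l) * 1 \<le> real (a l) * ip t r (fund_weight t r l) (dp i j)"
      using w_dp[OF as(2-7)] by (intro mult_left_mono) auto
    thus ?thesis using wt_ge[OF in1, of l a] as by simp
  qed
  have "real (a l) / (2 * real r + 2 - real i - real j) \<le> ip t r (weight t r a) (dp i j) / (2 * real r + 2 - real i - real j)"
    using as w r by (intro divide_right_mono) auto
  also have "\<dots> \<le> ip t r (weight t r a) (dp i j) / ip t r (rho t r) (dp i j)"
    using r wt_nonneg[OF in1, of a] by (intro divide_left_mono) auto
  finally show ?thesis using fac_eq[OF as(1) in1, of a] by simp
qed

lemma cd_ge_sub: "valid_type t r \<Longrightarrow> S \<subseteq> pos_roots t r \<Longrightarrow> prod (fac t r a) S \<le> char_degree t r a"
  unfolding cd_fac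
  by (rule prod_mono2) (auto simp: pos_fin intro: fac_ge1 order_trans[OF zero_le_one fac_ge1])



lemma pow_lem: "0 \<le> x \<Longrightarrow> x \<le> 1 \<Longrightarrow> (1 + x) ^ e \<le> 1 + (2 ^ e - 1) * (x::real)"
proof (induction e)
  case 0 thus ?case by simp
next
  case (Suc e)
  have h: "(1::real) \<le> 2 ^ e" by simp
  have "(1 + x) ^ Suc e = (1 + x) * (1 + x) ^ e" by simp
  also have "\<dots> \<le> (1 + x) * (1 + (2 ^ e - 1) * x)"
    using Suc by (intro mult_left_mono) auto
  also have "\<dots> = 1 + 2 ^ e * x + (2 ^ e - 1) * (x * x)" by (simp add: algebra_simps)
  also have "\<dots> \<le> 1 + 2 ^ e * x + (2 ^ e - 1) * x"
  proof -
    have "x * x \<le> x * 1" using Suc.prems by (intro mult_left_mono) auto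
    thus ?thesis using h by (intro add_left_mono mult_left_mono) auto
  qed
  also have "\<dots> = 1 + (2 ^ Suc e - 1) * x" by (simp add: algebra_simps)
  finally show ?case .
qed

lemma fac_pow: "2 ^ e - 1 \<le> (c::real) \<Longrightarrow> 0 \<le> x \<Longrightarrow> x \<le> 1 \<Longrightarrow> (1 + x) ^ e \<le> 1 + c * x"
  using pow_lem[of x e] mult_right_mono[of "2 ^ e - 1" c x] by linarith

lemma TA_lem: assumes ip: "(i::nat) \<le> p" and pq: "p \<le> q" shows
  "(\<Prod>j\<in>{p+1..q}. 1 + 1 / (real j - real i)) = (real q - real i + 1) / (real p - real i + 1)"
  using pq
proof (induction q rule: dec_induct)
  case base
  have "real p - real i + 1 \<noteq> 0" using ip by linarith
  thus ?case by simp
next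
  case (step q)
  have e: "{p+1..Suc q} = insert (Suc q) {p+1..q}" using step.hyps by auto
  have "(\<Prod>j\<in>{p+1..Suc q}. 1 + 1 / (real j - real i)) = (1 + 1 / (real q + 1 - real i)) * ((real q - real i + 1) / (real p - real i + 1))"
    unfolding e using step ip by (simp add: prod.insert)
  also have "\<dots> = (real (Suc q) - real i + 1) / (real p - real i + 1)"
  proof -
    have gen: "\<And>B P::real. B > 0 \<Longrightarrow> P > 0 \<Longrightarrow> (1 + 1 / B) * (B / P) = (B + 1) / P"
      by (simp add: field_simps)
    have d: "real q - real i + 1 > 0" "real p - real i + 1 > 0" using step.hyps ip by linarith+
    have e1: "real q + 1 - real i = real q - real i + 1" and e2: "real (Suc q) - real i + 1 = (real q - real i + 1) + 1" by simp_all
    show ?thesis unfolding e1 e2 by (rule gen[OF d])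
  qed
  finally show ?case .
qed

lemma TB_lem: "real k < (M::real) \<Longrightarrow> (\<Prod>i\<in>{1..k}. 1 + 1 / (M - real i)) = M / (M - real k)"
proof (induction k)
  case 0 thus ?case using \<open>real 0 < M\<close> by simp
next
  case (Suc k)
  have e: "{1..Suc k} = insert (Suc k) {1..k}" by auto
  have "(\<Prod>i\<in>{1..Suc k}. 1 + 1 / (M - real i)) = (1 + 1 / (M - real k - 1)) * (M / (M - real k))"
    unfolding e using Suc by (simp add: prod.insert)
  also have "1 + 1 / (M - real k - 1) = (M - real k) / (M - real k - 1)" using Suc.prems by (simp add: field_simps)
  hence "(1 + 1 / (M - real k - 1)) * (M / (M - real k)) = M / (M - real k - 1)" using Suc.prems by simp
  also have "\<dots> = M / (M - real (Suc k))" by simp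
  finally show ?case .
qed

lemma cd_ge_img: "valid_type t r \<Longrightarrow> inj_on g X \<Longrightarrow> g ` X \<subseteq> pos_roots t r \<Longrightarrow>
  (\<And>x. x \<in> X \<Longrightarrow> 0 \<le> h x \<and> h x \<le> fac t r a (g x)) \<Longrightarrow> prod h X \<le> char_degree t r a"
proof -
  assume v: "valid_type t r" "inj_on g X" "g ` X \<subseteq> pos_roots t r" and hx: "\<And>x. x \<in> X \<Longrightarrow> 0 \<le> h x \<and> h x \<le> fac t r a (g x)"
  have "prod h X \<le> prod (\<lambda>x. fac t r a (g x)) X" using hx by (intro prod_mono) auto
  also have "\<dots> = prod (fac t r a) (g ` X)" using v by (simp add: prod.reindex)
  also have "\<dots> \<le> char_degree t r a" using v by (intro cd_ge_sub) auto
  finally show ?thesis .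
qed

lemma blockI:
  assumes v: "valid_type t r" and s: "1 \<le> s" "s \<le> l" and l: "l < amb t r" "l \<le> r"
    and al: "2 ^ e - 1 \<le> real (a l)"
  shows "(((real (amb t r) - real l + 1) / real s) ^ s) ^ e \<le> char_degree t r a"
proof -
  define c where "c = amb t r"
  define X where "X = {l+1-s..l} \<times> {l+1..c}"
  define h where "h = (\<lambda>(i::nat,j::nat). (1 + 1 / (real j - real i)) ^ e)"
  have inj: "inj_on (\<lambda>(i,j). dm i j) X"
    unfolding inj_on_def X_def
  proof (clarify)
    fix i j i' j' assume "dm i j = dm i' j'" "i \<in> {l+1-s..l}" "j \<in> {l+1..c}" "i' \<in> {l+1-s..l}" "j' \<in> {l+1..c}"
    thus "i = i' \<and> j = j'" using dm_inj[of i j i' j'] by auto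
  qed
  have sub: "(\<lambda>(i,j). dm i j) ` X \<subseteq> pos_roots t r"
    using s l by (auto simp: X_def c_def intro!: dm_in[OF v])
  have hx: "0 \<le> h x \<and> h x \<le> fac t r a ((\<lambda>(i,j). dm i j) x)" if "x \<in> X" for x
  proof -
    obtain i j where x: "x = (i,j)" and ij: "l+1-s \<le> i" "i \<le> l" "l+1 \<le> j" "j \<le> c"
      using \<open>x \<in> X\<close> by (auto simp: X_def)
    have "1 \<le> real j - real i" using ij by auto
    hence x1: "0 \<le> 1 / (real j - real i)" "1 / (real j - real i) \<le> 1" by auto
    have "(1 + 1 / (real j - real i)) ^ e \<le> 1 + real (a l) * (1 / (real j - real i))"
      using fac_pow[OF al x1] .
    also have "\<dots> \<le> fac t r a (dm i j)"
      using fac_dm[OF v, of i l j a] ij s l by (auto simp: c_def)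
    finally show ?thesis using x1 by (simp add: x h_def)
  qed
  have "prod h X \<le> char_degree t r a" by (rule cd_ge_img[OF v inj sub hx])
  moreover have "prod h X = (\<Prod>i\<in>{l+1-s..l}. \<Prod>j\<in>{l+1..c}. 1 + 1 / (real j - real i)) ^ e"
    unfolding X_def h_def prod_power_distrib prod.cartesian_product by (simp add: split_def)
  moreover have "(\<Prod>i\<in>{l+1-s..l}. \<Prod>j\<in>{l+1..c}. 1 + 1 / (real j - real i)) =
      (\<Prod>i\<in>{l+1-s..l}. (real c - real i + 1) / (real l - real i + 1))"
    using l by (intro prod.cong refl TA_lem) (auto simp: c_def)
  moreover have "((real c - real l + 1) / real s) ^ s \<le> (\<Prod>i\<in>{l+1-s..l}. (real c - real i + 1) / (real l - real i + 1))"
  proof -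
    have "(\<Prod>i\<in>{l+1-s..l}. (real c - real l + 1) / real s) \<le> (\<Prod>i\<in>{l+1-s..l}. (real c - real i + 1) / (real l - real i + 1))"
    proof (rule prod_mono)
      fix i assume i: "i \<in> {l+1-s..l}"
      have p: "0 < real c - real l + 1" using l by (simp add: c_def)
      have "(real c - real l + 1) / real s \<le> (real c - real l + 1) / (real l - real i + 1)"
        using i s p by (intro divide_left_mono) auto
      also have "\<dots> \<le> (real c - real i + 1) / (real l - real i + 1)"
        using i by (intro divide_right_mono) auto
      finally show "0 \<le> (real c - real l + 1) / real s \<and> (real c - real l + 1) / real s \<le> (real c - real i + 1) / (real l - real i + 1)"
        using p s by simp
    qed
    moreover have "card {l+1-s..l} = s" using s by simp
    ultimately show ?thesis by simp
  qed
  moreover have "0 \<le> ((real c - real l + 1) / real s) ^ s" using l by (simp add: c_def)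
  ultimately show ?thesis unfolding c_def[symmetric]
    by (metis (no_types, lifting) order_trans power_mono)
qed



lemma blockII:
  assumes v: "valid_type t r" and s: "1 \<le> s" and l: "1 \<le> l" "l + s \<le> amb t r" "l \<le> r"
    and al: "2 ^ e - 1 \<le> real (a l)"
  shows "(((real l + 1) / real s) ^ s) ^ e \<le> char_degree t r a"
proof -
  define c where "c = amb t r"
  define X where "X = {l+1..l+s} \<times> {1..l}"
  define h where "h = (\<lambda>(j::nat,i::nat). (1 + 1 / (real j - real i)) ^ e)"
  have inj: "inj_on (\<lambda>(j,i). dm i j) X"
    unfolding inj_on_def X_def
  proof (clarify)
    fix i j i' j' assume "dm i j = dm i' j'" "j \<in> {l+1..l+s}" "i \<in> {1..l}" "j' \<in> {l+1..l+s}" "i' \<in> {1..l}"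
    thus "j = j' \<and> i = i'" using dm_inj[of i j i' j'] by auto
  qed
  have sub: "(\<lambda>(j,i). dm i j) ` X \<subseteq> pos_roots t r"
    using s l by (auto simp: X_def c_def intro!: dm_in[OF v])
  have hx: "0 \<le> h x \<and> h x \<le> fac t r a ((\<lambda>(j,i). dm i j) x)" if "x \<in> X" for x
  proof -
    obtain i j where x: "x = (j,i)" and ij: "1 \<le> i" "i \<le> l" "l+1 \<le> j" "j \<le> l+s"
      using \<open>x \<in> X\<close> by (auto simp: X_def)
    have "1 \<le> real j - real i" using ij by auto
    hence x1: "0 \<le> 1 / (real j - real i)" "1 / (real j - real i) \<le> 1" by auto
    have "(1 + 1 / (real j - real i)) ^ e \<le> 1 + real (a l) * (1 / (real j - real i))"
      using fac_pow[OF al x1] .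
    also have "\<dots> \<le> fac t r a (dm i j)"
      using fac_dm[OF v, of i l j a] ij s l by (auto simp: c_def)
    finally show ?thesis using x1 by (simp add: x h_def)
  qed
  have "prod h X \<le> char_degree t r a" by (rule cd_ge_img[OF v inj sub hx])
  moreover have "prod h X = (\<Prod>j\<in>{l+1..l+s}. \<Prod>i\<in>{1..l}. 1 + 1 / (real j - real i)) ^ e"
    unfolding X_def h_def prod_power_distrib prod.cartesian_product by (simp add: split_def)
  moreover have "(\<Prod>j\<in>{l+1..l+s}. \<Prod>i\<in>{1..l}. 1 + 1 / (real j - real i)) =
      (\<Prod>j\<in>{l+1..l+s}. real j / (real j - real l))"
    by (intro prod.cong refl TB_lem) auto
  moreover have "((real l + 1) / real s) ^ s \<le> (\<Prod>j\<in>{l+1..l+s}. real j / (real j - real l))"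
  proof -
    have "(\<Prod>j\<in>{l+1..l+s}. (real l + 1) / real s) \<le> (\<Prod>j\<in>{l+1..l+s}. real j / (real j - real l))"
    proof (rule prod_mono)
      fix j assume j: "j \<in> {l+1..l+s}"
      have "(real l + 1) / real s \<le> (real l + 1) / (real j - real l)"
        using j s by (intro divide_left_mono) auto
      also have "\<dots> \<le> real j / (real j - real l)"
        using j by (intro divide_right_mono) auto
      finally show "0 \<le> (real l + 1) / real s \<and> (real l + 1) / real s \<le> real j / (real j - real l)"
        using s by simp
    qed
    thus ?thesis by simp
  qed
  moreover have "0 \<le> ((real l + 1) / real s) ^ s" by simp
  ultimately show ?thesis
    by (metis (no_types, lifting) order_trans power_mono)
qed

lemma blockIII:
  assumes v: "valid_type t r" and t: "t \<noteq> TA" and s: "1 \<le> s" "2 * s + 2 \<le> r" and l: "r - s \<le> l" "l \<le> r"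
    and al: "2 ^ e - 1 \<le> real (a l)"
  shows "((real r / real (4 * s + 1)) ^ s) ^ e \<le> char_degree t r a"
proof -
  define X where "X = Sigma {r+1-2*s..r-s} (\<lambda>j. {1..j-1})"
  define h where "h = (\<lambda>(j::nat,i::nat). (1 + 1 / (2 * real r + 2 - real i - real j)) ^ e)"
  have inj: "inj_on (\<lambda>(j,i). dp i j) X"
    unfolding inj_on_def X_def
  proof (clarify)
    fix i j i' j' assume "dp i j = dp i' j'" "j \<in> {r+1-2*s..r-s}" "i \<in> {1..j-1}" "j' \<in> {r+1-2*s..r-s}" "i' \<in> {1..j'-1}"
    thus "j = j' \<and> i = i'" using dp_inj[of i j i' j'] by auto
  qed
  have sub: "(\<lambda>(j,i). dp i j) ` X \<subseteq> pos_roots t r"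
    using s by (auto simp: X_def intro!: dp_in[OF t])
  have hx: "0 \<le> h x \<and> h x \<le> fac t r a ((\<lambda>(j,i). dp i j) x)" if "x \<in> X" for x
  proof -
    obtain i j where x: "x = (j,i)" and ij: "1 \<le> i" "i \<le> j - 1" "r+1-2*s \<le> j" "j \<le> r-s"
      using \<open>x \<in> X\<close> by (auto simp: X_def)
    have "1 \<le> 2 * real r + 2 - real i - real j" using ij s by auto
    hence x1: "0 \<le> 1 / (2 * real r + 2 - real i - real j)" "1 / (2 * real r + 2 - real i - real j) \<le> 1" by auto
    have "(1 + 1 / (2 * real r + 2 - real i - real j)) ^ e \<le> 1 + real (a l) * (1 / (2 * real r + 2 - real i - real j))"
      using fac_pow[OF al x1] .
    also have "\<dots> \<le> fac t r a (dp i j)"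
      using fac_dp[OF v t, of i j l a] ij s l by auto
    finally show ?thesis using x1 by (simp add: x h_def)
  qed
  have "prod h X \<le> char_degree t r a" by (rule cd_ge_img[OF v inj sub hx])
  moreover have "prod h X = (\<Prod>j\<in>{r+1-2*s..r-s}. \<Prod>i\<in>{1..j-1}. 1 + 1 / (2 * real r + 2 - real i - real j)) ^ e"
    unfolding X_def h_def prod_power_distrib by (subst prod.Sigma) (auto simp: split_def)
  moreover have "(\<Prod>j\<in>{r+1-2*s..r-s}. \<Prod>i\<in>{1..j-1}. 1 + 1 / (2 * real r + 2 - real i - real j)) =
      (\<Prod>j\<in>{r+1-2*s..r-s}. (2 * real r + 2 - real j) / (2 * real r + 2 - real j - real (j - 1)))"
  proof (rule prod.cong[OF refl])
    fix j assume j: "j \<in> {r+1-2*s..r-s}"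
    have "(\<Prod>i\<in>{1..j-1}. 1 + 1 / (2 * real r + 2 - real i - real j)) =
          (\<Prod>i\<in>{1..j-1}. 1 + 1 / ((2 * real r + 2 - real j) - real i))"
      by (intro prod.cong refl) (simp add: algebra_simps)
    also have "\<dots> = (2 * real r + 2 - real j) / (2 * real r + 2 - real j - real (j - 1))"
      using j s by (intro TB_lem) auto
    finally show "(\<Prod>i\<in>{1..j-1}. 1 + 1 / (2 * real r + 2 - real i - real j)) = (2 * real r + 2 - real j) / (2 * real r + 2 - real j - real (j - 1))" .
  qed
  moreover have "(real r / real (4 * s + 1)) ^ s \<le> (\<Prod>j\<in>{r+1-2*s..r-s}. (2 * real r + 2 - real j) / (2 * real r + 2 - real j - real (j - 1)))"
  proof -
    have "(\<Prod>j\<in>{r+1-2*s..r-s}. real r / real (4 * s + 1)) \<le> (\<Prod>j\<in>{r+1-2*s..r-s}. (2 * real r + 2 - real j) / (2 * real r + 2 - real j - real (j - 1)))"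
    proof (rule prod_mono)
      fix j assume j: "j \<in> {r+1-2*s..r-s}"
      have d: "2 * real r + 2 - real j - real (j - 1) = 2 * real r + 3 - 2 * real j" using j s by auto
      have d1: "0 < 2 * real r + 3 - 2 * real j" "2 * real r + 3 - 2 * real j \<le> real (4 * s + 1)" using j s by auto
      have "real r / real (4 * s + 1) \<le> real r / (2 * real r + 3 - 2 * real j)"
        using d1 by (intro divide_left_mono) auto
      also have "\<dots> \<le> (2 * real r + 2 - real j) / (2 * real r + 3 - 2 * real j)"
        using j d1 by (intro divide_right_mono) auto
      finally show "0 \<le> real r / real (4 * s + 1) \<and> real r / real (4 * s + 1) \<le> (2 * real r + 2 - real j) / (2 * real r + 2 - real j - real (j - 1))"
        unfolding d by simp
    qed
    moreover have "card {r+1-2*s..r-s} = s" using s by simp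
    ultimately show ?thesis by simp
  qed
  moreover have "0 \<le> (real r / real (4 * s + 1)) ^ s" by simp
  ultimately show ?thesis
    by (metis (no_types, lifting) order_trans power_mono)
qed



lemma cmp: "real r \<le> 2 * X \<Longrightarrow> 1 \<le> s \<Longrightarrow> real r / real (4 * s + 1) \<le> X / real s"
proof -
  assume a: "real r \<le> 2 * X" "1 \<le> s"
  have "real r / real (4 * s + 1) \<le> real r / (2 * real s)"
    using a by (intro divide_left_mono) auto
  also have "\<dots> \<le> X / real s" using a by (simp add: field_simps)
  finally show ?thesis .
qed

lemma gen:
  assumes v: "valid_type t r" and s: "1 \<le> s" "2 * s + 2 \<le> r" and l: "s \<le> l" "l \<le> r"
    and A: "t = TA \<longrightarrow> l + s \<le> r + 1" and al: "2 ^ e - 1 \<le> real (a l)"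
  shows "((real r / real (4 * s + 1)) ^ s) ^ e \<le> char_degree t r a"
proof -
  have z: "0 \<le> real r / real (4 * s + 1)" by simp
  show ?thesis
  proof (cases "l + s \<le> amb t r")
    case True
    show ?thesis
    proof (cases "2 * l \<le> amb t r")
      case True
      have "real r \<le> 2 * (real (amb t r) - real l + 1)" using True by (cases t) auto
      hence "real r / real (4 * s + 1) \<le> (real (amb t r) - real l + 1) / real s" using s by (intro cmp) auto
      hence "((real r / real (4 * s + 1)) ^ s) ^ e \<le> (((real (amb t r) - real l + 1) / real s) ^ s) ^ e"
        using z by (intro power_mono zero_le_power) auto
      also have "\<dots> \<le> char_degree t r a" using \<open>l + s \<le> amb t r\<close> s l al by (intro blockI[OF v]) auto
      finally show ?thesis .
    next
      case False
      have "real r \<le> 2 * (real l + 1)" using False by (cases t) auto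
      hence "real r / real (4 * s + 1) \<le> (real l + 1) / real s" using s by (intro cmp) auto
      hence "((real r / real (4 * s + 1)) ^ s) ^ e \<le> (((real l + 1) / real s) ^ s) ^ e"
        using z by (intro power_mono zero_le_power) auto
      also have "\<dots> \<le> char_degree t r a" using \<open>l + s \<le> amb t r\<close> s l al by (intro blockII[OF v]) auto
      finally show ?thesis .
    qed
  next
    case False
    hence "t \<noteq> TA" using A by auto
    moreover have "r - s \<le> l" using False by (cases t) auto
    ultimately show ?thesis using s l al by (intro blockIII[OF v]) auto
  qed
qed

lemma final_ineq: "(K::real) \<ge> 1 \<Longrightarrow> K ^ (n+1) < real r \<Longrightarrow> real r ^ n < (real r / K) ^ (n+1)"
proof -
  assume K: "K \<ge> 1" "K ^ (n+1) < real r"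
  have rp: "real r > 0" using K by (smt (verit) one_le_power)
  have "(real r / K) ^ (n+1) = real r ^ n * (real r / K ^ (n+1))" by (simp add: power_divide)
  moreover have "real r / K ^ (n+1) > 1" using K by (subst less_divide_eq) (auto intro: order.strict_trans2)
  moreover have "real r ^ n * 1 < real r ^ n * (real r / K ^ (n+1))"
    using rp \<open>real r / K ^ (n+1) > 1\<close> by (intro mult_strict_left_mono) auto
  ultimately show ?thesis by simp
qed



lemma sum_if1: fixes m k :: nat shows "(\<Sum>i\<in>{1..m}. if i = k then f i else (0::nat)) = (if 1 \<le> k \<and> k \<le> m then f k else 0)"
  by (subst sum.delta) simp_all

lemma sum_if2: fixes m k r :: nat shows "k \<in> {1..r} \<Longrightarrow> m \<le> r \<Longrightarrow>
  (\<Sum>i\<in>{1..m}. if r + 1 - i = k then f i else (0::nat)) = (if r + 1 - k \<le> m then f (r + 1 - k) else 0)"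
proof -
  assume k: "k \<in> {1..r}" and m: "m \<le> r"
  have "(\<Sum>i\<in>{1..m}. if r + 1 - i = k then f i else (0::nat)) = (\<Sum>i\<in>{1..m}. if i = r + 1 - k then f i else 0)"
  proof (rule sum.cong[OF refl])
    fix i assume "i \<in> {1..m}"
    hence "(r + 1 - i = k) = (i = r + 1 - k)" using k m by auto
    thus "(if r + 1 - i = k then f i else 0) = (if i = r + 1 - k then f i else 0)" by simp
  qed
  also have "\<dots> = (if r + 1 - k \<le> m then f (r + 1 - k) else 0)" using k by (subst sum.delta) auto
  finally show ?thesis .
qed

theorem lemma2p6:
  fixes n :: nat
  assumes "n \<ge> 1"
  shows "\<exists>(R::nat) (m::nat) (\<Lambda>::nat list set).
     m \<le> R \<and> finite \<Lambda> \<and> (\<forall>xs\<in>\<Lambda>. length xs = m) \<and>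
     (\<forall>t r (a::nat \<Rightarrow> nat).
        valid_type t r \<and> r \<ge> R \<and> char_degree t r a \<le> real r ^ n \<longrightarrow>
        (t = TA \<and>
           (\<exists>xs\<in>\<Lambda>. \<exists>ys\<in>\<Lambda>. \<forall>k\<in>{1..r}.
              a k = (\<Sum>i\<in>{1..m}. if i = k then xs ! (i - 1) else 0)
                  + (\<Sum>i\<in>{1..m}. if r + 1 - i = k then ys ! (i - 1) else 0)))
        \<or> (t \<in> {TB, TC, TD} \<and>
           (\<exists>xs\<in>\<Lambda>. \<forall>k\<in>{1..r}.
              a k = (\<Sum>i\<in>{1..m}. if i = k then xs ! (i - 1) else 0))))"
proof -
  define m where "m = n + 1"
  define K where "K = 4 * m + 1"
  define R where "R = K ^ (n + 1) + 1"
  define B where "B = (2::nat) ^ (n + 1) - 1"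
  define L where "L = {xs. set xs \<subseteq> {..<B} \<and> length xs = m}"
  have KR: "K \<le> K ^ (n + 1)" using self_le_power[of K "n+1"] K_def by simp
  have mR: "m \<le> R" using KR unfolding R_def K_def by linarith
  have finL: "finite L" unfolding L_def by (rule finite_lists_length_eq) simp
  have lenL: "\<forall>xs\<in>L. length xs = m" by (simp add: L_def)
  have main: "(t = TA \<and>
           (\<exists>xs\<in>L. \<exists>ys\<in>L. \<forall>k\<in>{1..r}.
              a k = (\<Sum>i\<in>{1..m}. if i = k then xs ! (i - 1) else 0)
                  + (\<Sum>i\<in>{1..m}. if r + 1 - i = k then ys ! (i - 1) else 0)))
        \<or> (t \<in> {TB, TC, TD} \<and>
           (\<exists>xs\<in>L. \<forall>k\<in>{1..r}.
              a k = (\<Sum>i\<in>{1..m}. if i = k then xs ! (i - 1) else 0)))"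
    if v: "valid_type t r" and rR: "r \<ge> R" and cd: "char_degree t r a \<le> real r ^ n" for t r a
  proof -
    have "K ^ (n + 1) < r" using rR unfolding R_def by simp
    hence "real (K ^ (n + 1)) < real r" by (simp only: of_nat_less_iff)
    hence rK: "real K ^ (n + 1) < real r" by simp
    have r2: "2 * m + 2 \<le> r" using KR rR unfolding R_def K_def m_def by linarith
    have big: "a l < B" if l: "l \<in> {1..r}" for l
    proof (rule ccontr)
      assume "\<not> a l < B"
      hence "real B \<le> real (a l)" by simp
      moreover have "real B = 2 ^ (n+1) - 1" unfolding B_def by (simp add: of_nat_diff)
      ultimately have "2 ^ (n+1) - 1 \<le> real (a l)" by simp
      hence "((real r / real (4 * 1 + 1)) ^ 1) ^ (n+1) \<le> char_degree t r a"
        using l r2 m_def by (intro gen[OF v]) auto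
      moreover have "real 5 ^ (n+1) \<le> real K ^ (n+1)" unfolding K_def m_def by (intro power_mono) auto
      hence "real r ^ n < (real r / 5) ^ (n+1)" using rK by (intro final_ineq) auto
      ultimately show False using cd by simp
    qed
    have mid: "a l = 0" if l: "m < l" "l \<le> r" and A: "t = TA \<longrightarrow> l + m \<le> r" for l
    proof (rule ccontr)
      assume "a l \<noteq> 0"
      hence "2 ^ 1 - 1 \<le> real (a l)" by simp
      hence "((real r / real (4 * m + 1)) ^ m) ^ 1 \<le> char_degree t r a"
        using l r2 A m_def by (intro gen[OF v]) auto
      moreover have "real r ^ n < (real r / real K) ^ (n+1)" using rK unfolding K_def by (intro final_ineq) auto
      ultimately show False using cd unfolding K_def m_def by simp
    qed
    define xs where "xs = map (\<lambda>i. a (i + 1)) [0..<m]"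
    have xsL: "xs \<in> L" unfolding L_def xs_def using big r2 by auto
    have xsn: "xs ! (i - 1) = a i" if "1 \<le> i" "i \<le> m" for i
    proof -
      have "[0..<m] ! (i - 1) = i - 1" using that by simp
      thus ?thesis using that unfolding xs_def by simp
    qed
    have s1: "(\<Sum>i\<in>{1..m}. if i = k then xs ! (i - 1) else 0) = (if k \<le> m then a k else 0)" if "k \<in> {1..r}" for k
      using that xsn by (simp add: sum_if1[where f = "\<lambda>i. xs ! (i - 1)"])
    show ?thesis
    proof (cases "t = TA")
      case True
      define ys where "ys = map (\<lambda>i. a (r - i)) [0..<m]"
      have ysL: "ys \<in> L" unfolding L_def ys_def using big r2 by auto
      have s2: "(\<Sum>i\<in>{1..m}. if r + 1 - i = k then ys ! (i - 1) else 0) = (if r + 1 - k \<le> m then a k else 0)"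
        if k: "k \<in> {1..r}" for k
      proof -
        have "(\<Sum>i\<in>{1..m}. if r + 1 - i = k then ys ! (i - 1) else 0) = (if r + 1 - k \<le> m then ys ! (r + 1 - k - 1) else 0)"
          using k r2 by (intro sum_if2) auto
        also have "\<dots> = (if r + 1 - k \<le> m then a k else 0)" using k unfolding ys_def by auto
        finally show ?thesis .
      qed
      have "\<forall>k\<in>{1..r}. a k = (\<Sum>i\<in>{1..m}. if i = k then xs ! (i - 1) else 0)
                  + (\<Sum>i\<in>{1..m}. if r + 1 - i = k then ys ! (i - 1) else 0)"
      proof
        fix k assume k: "k \<in> {1..r}"
        show "a k = (\<Sum>i\<in>{1..m}. if i = k then xs ! (i - 1) else 0)
                  + (\<Sum>i\<in>{1..m}. if r + 1 - i = k then ys ! (i - 1) else 0)"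
        proof (cases "k \<le> m")
          case True
          hence "\<not> r + 1 - k \<le> m" using r2 by linarith
          thus ?thesis unfolding s1[OF k] s2[OF k] using True by simp
        next
          case False
          show ?thesis
          proof (cases "r + 1 - k \<le> m")
            case True2: True
            thus ?thesis unfolding s1[OF k] s2[OF k] using False by simp
          next
            case False2: False
            have "a k = 0" using k False False2 by (intro mid) auto
            thus ?thesis unfolding s1[OF k] s2[OF k] using False False2 by simp
          qed
        qed
      qed
      thus ?thesis using True xsL ysL by blast
    next
      case False
      hence "t \<in> {TB, TC, TD}" by (cases t) auto
      moreover have "\<forall>k\<in>{1..r}. a k = (\<Sum>i\<in>{1..m}. if i = k then xs ! (i - 1) else 0)"
        using s1 mid False by auto
      ultimately show ?thesis using xsL by blast
    qed
  qed
  show ?thesis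
    apply (rule exI[of _ R], rule exI[of _ m], rule exI[of _ L])
    apply (intro conjI mR finL lenL allI impI)
    apply (elim conjE)
    apply (rule main)
      apply assumption+
    done
qed

end
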